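(* Let $\mathfrak{q}_0$ be the space form vector of the Euclidean plane (the vector representing the point $\infty$), and let $G=(g^{(1)},g^{(2)},\dots)$ be a planar circular net of $(M)$-type, consecutive curves forming Ribaucour pairs of $(\mathfrak{m}^{(j,j+1)})$-type. Then lifted-foldings of $G$ (canonically embedded in 3-space) produce circular nets whose curves lie in Euclidean planes if and only if $\langle\mathfrak{m}^{(j,j+1)},\mathfrak{q}_0\rangle=0$ for all $j$.
   Context: Planar light cone model: $\mathbb{R}^{3,2}$ with form of signature $(3,2)$ (coordinates with signs $+,+,+,-,-$), light cone $\mathcal{L}$; $\mathfrak{p}=(0,0,0,0,1)$; point $(x,y)\leftrightarrow(x,y,\frac12(1-x^2-y^2),\frac12(1+x^2+y^2),0)$, $\infty\leftrightarrow\mathfrak{q}_0=(0,0,1,-1,0)$; other elements of $\mathbb{P}(\mathcal{L})$ are oriented circles and lines (lines are those orthogonal to $\mathfrak{q}_0$); incidence = orthogonality. Inversion in $\mathfrak{a}$: $\sigma_a(x)=x-\frac{2\langle x,\mathfrak{a}\rangle}{\langle\mathfrak{a},\mathfrak{a}\rangle}\mathfrak{a}$. Ribaucour pair of curves: quadrilaterals $f_i,f_j,g_j,g_i$ concircular; R-evolution map: M-inversions in $\mathfrak{f}_i-\mathfrak{f}_j=\mathfrak{g}_i-\mathfrak{g}_j$ for suitable representatives; $(\mathfrak{m})$-type if $\mathrm{span}\{\mathfrak{m},\mathfrak{p}\}$ is 2-dimensional and fixed by all these inversions. A planar circular net of $(M)$-type is a sequence of planar curves with consecutive pairs of $(\mathfrak{m}^{(j,j+1)})$-type.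 Canonical embedding $\iota:\mathbb{R}^{3,2}\to\mathbb{R}^{4,2}$, $(x_1,\dots,x_5)\mapsto(x_1,x_2,0,x_3,x_4,x_5)$, places the net in the $xy$-plane of $\mathbb{R}^3$ (circles become spheres orthogonal to that plane). Lifted-folding of such a net: successively applying to the curves (composed) M-inversions in complexes $\mathfrak{n}=\mathfrak{m}^1+\tilde\lambda\mathfrak{m}^2+\langle\mathfrak{m}^1+\tilde\lambda\mathfrak{m}^2,\mathfrak{p}\rangle\mathfrak{p}$, $\tilde\lambda\in\mathbb{R}$, where $\mathfrak{m}^1$ represents the plane and $\mathfrak{m}^2=\iota(\mathfrak{m}^{(j,j+1)})$ (transported by previously applied inversions); the result is a circular net whose curves lie on spheres. *)

theory Defs
  imports "HOL-Analysis.Analysis"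
begin

text \<open>Vectors of R^(3,2) are elements of real^5 with components x$1,...,x$5;
  vectors of R^(4,2) are elements of real^6 with components x$1,...,x$6
  (in the numeral type 6 the index 6 coincides with 0).\<close>

definition lor32 :: "real^5 \<Rightarrow> real^5 \<Rightarrow> real" where
  "lor32 x y = x$1*y$1 + x$2*y$2 + x$3*y$3 - x$4*y$4 - x$5*y$5"

definition lor42 :: "real^6 \<Rightarrow> real^6 \<Rightarrow> real" where
  "lor42 x y = x$1*y$1 + x$2*y$2 + x$3*y$3 + x$4*y$4 - x$5*y$5 - x$6*y$6"

text \<open>The point sphere complex p and the space form vector q0 (the point at infinity).\<close>
definition pp :: "real^5" where "pp = vector [0,0,0,0,1]"
definition q0 :: "real^5" where "q0 = vector [0,0,1,-1,0]"

definition inv32 :: "real^5 \<Rightarrow> real^5 \<Rightarrow> real^5" where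
  "inv32 a x = x - (2 * lor32 x a / lor32 a a) *\<^sub>R a"

definition inv42 :: "real^6 \<Rightarrow> real^6 \<Rightarrow> real^6" where
  "inv42 a x = x - (2 * lor42 x a / lor42 a a) *\<^sub>R a"

text \<open>A (homogeneous representative of a) point of the Euclidean plane:
  a lightlike vector orthogonal to p, different from the point at infinity
  (i.e. not orthogonal to q0).\<close>
definition planar_point :: "real^5 \<Rightarrow> bool" where
  "planar_point x \<longleftrightarrow> lor32 x x = 0 \<and> lor32 x pp = 0 \<and> lor32 x q0 \<noteq> 0"

text \<open>An oriented circle or line: a lightlike vector not orthogonal to p.\<close>
definition circle32 :: "real^5 \<Rightarrow> bool" where
  "circle32 c \<longleftrightarrow> lor32 c c = 0 \<and> lor32 c pp \<noteq> 0"

definition concircular :: "real^5 \<Rightarrow> real^5 \<Rightarrow> real^5 \<Rightarrow> real^5 \<Rightarrow> bool" where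
  "concircular a b c d \<longleftrightarrow>
     (\<exists>s. circle32 s \<and> lor32 s a = 0 \<and> lor32 s b = 0 \<and> lor32 s c = 0 \<and> lor32 s d = 0)"

definition planar_curve :: "(int \<Rightarrow> real^5) \<Rightarrow> bool" where
  "planar_curve f \<longleftrightarrow> (\<forall>i. planar_point (f i))"

definition ribaucour_pair :: "(int \<Rightarrow> real^5) \<Rightarrow> (int \<Rightarrow> real^5) \<Rightarrow> bool" where
  "ribaucour_pair f g \<longleftrightarrow> (\<forall>i. concircular (f i) (f (i+1)) (g (i+1)) (g i))"

text \<open>Ribaucour pair of (m)-type: span{m,p} is 2-dimensional and, for every edge,
  the M-inversion of the R-evolution map (inversion in f_i - f_(i+1) = g_i - g_(i+1)
  for suitable representatives) fixes span{m,p}.\<close>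
definition ribaucour_pair_type :: "real^5 \<Rightarrow> (int \<Rightarrow> real^5) \<Rightarrow> (int \<Rightarrow> real^5) \<Rightarrow> bool" where
  "ribaucour_pair_type m f g \<longleftrightarrow>
     ribaucour_pair f g \<and> dim (span {m, pp}) = 2 \<and>
     (\<forall>i. \<exists>\<alpha> \<beta> \<gamma> \<delta> :: real. \<alpha> \<noteq> 0 \<and> \<beta> \<noteq> 0 \<and> \<gamma> \<noteq> 0 \<and> \<delta> \<noteq> 0 \<and>
        (let a = \<alpha> *\<^sub>R f i - \<beta> *\<^sub>R f (i+1) in
           a = \<gamma> *\<^sub>R g i - \<delta> *\<^sub>R g (i+1) \<and> lor32 a a \<noteq> 0 \<and>
           inv32 a ` span {m, pp} = span {m, pp}))"

definition planar_circular_net_M :: "(nat \<Rightarrow> int \<Rightarrow> real^5) \<Rightarrow> (nat \<Rightarrow> real^5) \<Rightarrow> bool" where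
  "planar_circular_net_M g m \<longleftrightarrow>
     (\<forall>j. planar_curve (g j)) \<and> (\<forall>j. ribaucour_pair_type (m j) (g j) (g (Suc j)))"

definition iota :: "real^5 \<Rightarrow> real^6" where
  "iota x = vector [x$1, x$2, 0, x$3, x$4, x$5]"

definition pp6 :: "real^6" where "pp6 = iota pp"
definition q06 :: "real^6" where "q06 = iota q0"

definition represents_xy_plane :: "real^6 \<Rightarrow> bool" where
  "represents_xy_plane m1 \<longleftrightarrow>
     (\<exists>c. c \<noteq> 0 \<and> (m1 = c *\<^sub>R vector [0,0,1,0,0,1] \<or> m1 = c *\<^sub>R vector [0,0,1,0,0,-1]))"

definition fold_complex :: "real^6 \<Rightarrow> real^6 \<Rightarrow> real \<Rightarrow> real^6" where
  "fold_complex a b l = (a + l *\<^sub>R b) + lor42 (a + l *\<^sub>R b) pp6 *\<^sub>R pp6"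

text \<open>Composed M-inversions of a lifted-folding with parameters lam j; at step j the plane
  and iota (m j) are transported by the previously applied inversions.\<close>
fun fold_map :: "real^6 \<Rightarrow> (nat \<Rightarrow> real^5) \<Rightarrow> (nat \<Rightarrow> real) \<Rightarrow> nat \<Rightarrow> real^6 \<Rightarrow> real^6" where
  "fold_map m1 m lam 0 = id"
| "fold_map m1 m lam (Suc j) =
     inv42 (fold_complex (fold_map m1 m lam j m1) (fold_map m1 m lam j (iota (m j))) (lam j))
     \<circ> fold_map m1 m lam j"

definition fold_vec :: "real^6 \<Rightarrow> (nat \<Rightarrow> real^5) \<Rightarrow> (nat \<Rightarrow> real) \<Rightarrow> nat \<Rightarrow> real^6" where
  "fold_vec m1 m lam j =
     fold_complex (fold_map m1 m lam j m1) (fold_map m1 m lam j (iota (m j))) (lam j)"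

text \<open>Parameters are admissible when all complexes are non-null (so the inversions exist).\<close>
definition admissible :: "real^6 \<Rightarrow> (nat \<Rightarrow> real^5) \<Rightarrow> (nat \<Rightarrow> real) \<Rightarrow> bool" where
  "admissible m1 m lam \<longleftrightarrow> (\<forall>j. lor42 (fold_vec m1 m lam j) (fold_vec m1 m lam j) \<noteq> 0)"

definition lifted_folding ::
  "(nat \<Rightarrow> int \<Rightarrow> real^5) \<Rightarrow> real^6 \<Rightarrow> (nat \<Rightarrow> real^5) \<Rightarrow> (nat \<Rightarrow> real) \<Rightarrow> nat \<Rightarrow> int \<Rightarrow> real^6" where
  "lifted_folding g m1 m lam j i = fold_map m1 m lam j (iota (g j i))"

definition folding_sphere :: "real^6 \<Rightarrow> (nat \<Rightarrow> real^5) \<Rightarrow> (nat \<Rightarrow> real) \<Rightarrow> nat \<Rightarrow> real^6" where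
  "folding_sphere m1 m lam j = fold_map m1 m lam j m1"

text \<open>A Euclidean plane of R^3 in the light cone model of R^(4,2): an (oriented) sphere
  vector orthogonal to the point at infinity.\<close>
definition euclidean_plane :: "real^6 \<Rightarrow> bool" where
  "euclidean_plane s \<longleftrightarrow> lor42 s s = 0 \<and> lor42 s pp6 \<noteq> 0 \<and> lor42 s q06 = 0"

definition curve_lies_in_plane :: "(int \<Rightarrow> real^6) \<Rightarrow> real^6 \<Rightarrow> bool" where
  "curve_lies_in_plane h s \<longleftrightarrow> euclidean_plane s \<and> (\<forall>i. lor42 (h i) s = 0)"

end

theory Submission imports Defs begin

lemma l42_addL: "lor42 (x + y) z = lor42 x z + lor42 y z"
  by (simp add: lor42_def algebra_simps)
lemma l42_addR: "lor42 z (x + y) = lor42 z x + lor42 z y"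
  by (simp add: lor42_def algebra_simps)
lemma l42_diffL: "lor42 (x - y) z = lor42 x z - lor42 y z"
  by (simp add: lor42_def algebra_simps)
lemma l42_diffR: "lor42 z (x - y) = lor42 z x - lor42 z y"
  by (simp add: lor42_def algebra_simps)
lemma l42_scaleL: "lor42 (r *\<^sub>R x) z = r * lor42 x z"
  by (simp add: lor42_def algebra_simps)
lemma l42_scaleR: "lor42 z (r *\<^sub>R x) = r * lor42 z x"
  by (simp add: lor42_def algebra_simps)
lemma l42_sym: "lor42 x y = lor42 y x"
  by (simp add: lor42_def algebra_simps)
lemmas l42_lin = l42_addL l42_addR l42_diffL l42_diffR l42_scaleL l42_scaleR

lemma pp6_comp: "pp6$1 = 0" "pp6$2 = 0" "pp6$3 = 0" "pp6$4 = 0" "pp6$5 = 0" "pp6$6 = 1"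
  by (simp_all add: pp6_def iota_def pp_def vector_def)
lemma q06_comp: "q06$1 = 0" "q06$2 = 0" "q06$3 = 0" "q06$4 = 1" "q06$5 = -1" "q06$6 = 0"
  by (simp_all add: q06_def iota_def q0_def vector_def)
lemma iota_comp: "iota x$1 = x$1" "iota x$2 = x$2" "iota x$3 = 0" "iota x$4 = x$3"
   "iota x$5 = x$4" "iota x$6 = x$5"
  by (simp_all add: iota_def vector_def)

lemma l42_pp6: "lor42 x pp6 = - x$6" by (simp add: lor42_def pp6_comp)
lemma l42_pp6pp6: "lor42 pp6 pp6 = -1" by (simp add: l42_pp6 pp6_comp)
lemma l42_q06: "lor42 x q06 = x$4 + x$5" by (simp add: lor42_def q06_comp)
lemma l42_pp6q06: "lor42 pp6 q06 = 0" by (simp add: l42_q06 pp6_comp)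
lemma l42_iota: "lor42 (iota x) (iota y) = lor32 x y"
  by (simp add: lor42_def lor32_def iota_comp)
lemma l42_iota_pp6: "lor42 (iota x) pp6 = - x$5" by (simp add: l42_pp6 iota_comp)
lemma l42_iota_q06: "lor42 (iota x) q06 = lor32 x q0"
  by (simp add: q06_def l42_iota)
lemma l32_pp: "lor32 x pp = - x$5" by (simp add: lor32_def pp_def vector_def)

lemma m1_props:
  assumes "represents_xy_plane m1"
  shows "m1$6 \<noteq> 0" "lor42 m1 m1 = 0" "lor42 m1 q06 = 0" "lor42 (iota x) m1 = - x$5 * m1$6"
  using assms unfolding represents_xy_plane_def
  by (auto simp: lor42_def q06_comp iota_comp vector_def)

lemma inv42_lor: "lor42 (inv42 a x) y = lor42 x y - (2*lor42 x a / lor42 a a) * lor42 a y"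
  by (simp add: inv42_def l42_lin)
lemma inv42_iso: assumes "lor42 a a \<noteq> 0"
  shows "lor42 (inv42 a x) (inv42 a y) = lor42 x y"
proof -
  have e: "lor42 a y = lor42 y a" "lor42 a x = lor42 x a" by (rule l42_sym)+
  show ?thesis using assms unfolding inv42_def l42_lin e
    by (simp add: field_simps power2_eq_square)
qed
lemma inv42_fix: "lor42 x a = 0 \<Longrightarrow> inv42 a x = x" by (simp add: inv42_def)
lemma fc_pp: "lor42 (fold_complex a b l) pp6 = 0"
  by (simp add: fold_complex_def l42_lin l42_pp6pp6)

definition isoF :: "(real^6 \<Rightarrow> real^6) \<Rightarrow> bool" where
  "isoF F \<longleftrightarrow> (\<forall>x y. lor42 (F x) (F y) = lor42 x y) \<and> F pp6 = pp6"

lemma isoF_pp: "isoF F \<Longrightarrow> lor42 (F x) pp6 = lor42 x pp6"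
  unfolding isoF_def by metis

lemma fc_norm: assumes "isoF F"
  shows "lor42 (fold_complex (F a) (F b) l) (fold_complex (F a) (F b) l)
     = lor42 (a + l *\<^sub>R b) (a + l *\<^sub>R b) + (lor42 (a + l *\<^sub>R b) pp6)^2"
proof -
  have i: "lor42 (F x) (F y) = lor42 x y" for x y using assms unfolding isoF_def by blast
  have p: "lor42 (F x) pp6 = lor42 x pp6" "lor42 pp6 (F x) = lor42 x pp6" for x
    using isoF_pp[OF assms] l42_sym by metis+
  show ?thesis unfolding fold_complex_def l42_lin i p l42_pp6pp6
    by (simp add: l42_sym[of pp6] algebra_simps power2_eq_square)
qed

lemma fc_a: assumes "isoF F"
  shows "lor42 (F a) (fold_complex (F a) (F b) l)
     = lor42 a (a + l *\<^sub>R b) + lor42 (a + l *\<^sub>R b) pp6 * lor42 a pp6"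
proof -
  have i: "lor42 (F x) (F y) = lor42 x y" for x y using assms unfolding isoF_def by blast
  have p: "lor42 (F x) pp6 = lor42 x pp6" "lor42 pp6 (F x) = lor42 x pp6" for x
    using isoF_pp[OF assms] l42_sym by metis+
  show ?thesis unfolding fold_complex_def l42_lin i p l42_pp6pp6
    by (simp add: l42_sym[of pp6] algebra_simps)
qed

lemma fc_q: assumes "isoF F" "F q06 = q06"
  shows "lor42 (fold_complex (F a) (F b) l) q06 = lor42 a q06 + l * lor42 b q06"
proof -
  have i: "lor42 (F x) q06 = lor42 x q06" for x using assms unfolding isoF_def by metis
  show ?thesis unfolding fold_complex_def l42_lin i l42_pp6q06 by simp
qed

lemma F_iso:
  assumes "\<forall>i<j. lor42 (fold_vec m1 m lam i) (fold_vec m1 m lam i) \<noteq> 0"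
  shows "isoF (fold_map m1 m lam j)"
  using assms
proof (induction j)
  case 0 then show ?case by (simp add: isoF_def)
next
  case (Suc j)
  then have IH: "isoF (fold_map m1 m lam j)" and N: "lor42 (fold_vec m1 m lam j) (fold_vec m1 m lam j) \<noteq> 0"
    by auto
  have fx: "inv42 (fold_vec m1 m lam j) pp6 = pp6"
    by (rule inv42_fix) (simp add: fold_vec_def fc_pp l42_sym[of pp6])
  show ?case using IH N fx inv42_iso[OF N]
    by (simp add: isoF_def fold_vec_def[symmetric])
qed

lemma F_q:
  assumes "represents_xy_plane m1"
    and "\<forall>i<j. lor42 (fold_vec m1 m lam i) (fold_vec m1 m lam i) \<noteq> 0"
    and "\<forall>i<j. lam i = 0 \<or> lor32 (m i) q0 = 0"
  shows "fold_map m1 m lam j q06 = q06"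
  using assms(2,3)
proof (induction j)
  case 0 then show ?case by simp
next
  case (Suc j)
  then have IH: "fold_map m1 m lam j q06 = q06" and N: "lor42 (fold_vec m1 m lam j) (fold_vec m1 m lam j) \<noteq> 0"
    and z: "lam j = 0 \<or> lor32 (m j) q0 = 0" by auto
  have iso: "isoF (fold_map m1 m lam j)" using F_iso Suc.prems by auto
  have "lor42 (fold_vec m1 m lam j) q06 = 0"
    unfolding fold_vec_def fc_q[OF iso IH] l42_iota_q06 m1_props[OF assms(1)] using z by auto
  then have fx: "inv42 (fold_vec m1 m lam j) q06 = q06"
    by (intro inv42_fix) (simp add: l42_sym[of q06])
  show ?case using IH fx by (simp add: fold_vec_def[symmetric])
qed

lemma fv_norm:
  assumes m1: "represents_xy_plane m1"
    and "\<forall>i<j. lor42 (fold_vec m1 m lam i) (fold_vec m1 m lam i) \<noteq> 0"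
  shows "lor42 (fold_vec m1 m lam j) (fold_vec m1 m lam j)
     = (m1$6)^2 + (lam j)^2 * (lor32 (m j) (m j) + (m j $ 5)^2)"
proof -
  have iso: "isoF (fold_map m1 m lam j)" using F_iso assms by auto
  have s: "lor42 m1 (iota x) = - x$5 * m1$6" for x using m1_props(4)[OF m1] l42_sym by metis
  show ?thesis unfolding fold_vec_def fc_norm[OF iso] l42_lin m1_props[OF m1] s l42_iota l42_pp6
     l42_iota_pp6[unfolded l42_pp6] by (simp add: iota_comp algebra_simps power2_eq_square)
qed

lemma fv_a:
  assumes m1: "represents_xy_plane m1"
    and "\<forall>i<j. lor42 (fold_vec m1 m lam i) (fold_vec m1 m lam i) \<noteq> 0"
  shows "lor42 (fold_map m1 m lam j m1) (fold_vec m1 m lam j) = (m1$6)^2"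
proof -
  have iso: "isoF (fold_map m1 m lam j)" using F_iso assms by auto
  have s: "lor42 m1 (iota x) = - x$5 * m1$6" for x using m1_props(4)[OF m1] l42_sym by metis
  show ?thesis unfolding fold_vec_def fc_a[OF iso] l42_lin m1_props[OF m1] s l42_iota l42_pp6
     l42_iota_pp6[unfolded l42_pp6] by (simp add: iota_comp algebra_simps power2_eq_square)
qed

theorem corollary2p11:
  fixes g :: "nat \<Rightarrow> int \<Rightarrow> real^5" and m :: "nat \<Rightarrow> real^5" and m1 :: "real^6"
  assumes "planar_circular_net_M g m"
    and "represents_xy_plane m1"
  shows "(\<forall>lam. admissible m1 m lam \<longrightarrow>
            (\<forall>j. curve_lies_in_plane (lifted_folding g m1 m lam j) (folding_sphere m1 m lam j)))
         \<longleftrightarrow> (\<forall>j. lor32 (m j) q0 = 0)"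
proof
  note m1 = assms(2)
  have c6: "m1$6 \<noteq> 0" by (rule m1_props(1)[OF m1])
  assume L: "\<forall>lam. admissible m1 m lam \<longrightarrow>
            (\<forall>j. curve_lies_in_plane (lifted_folding g m1 m lam j) (folding_sphere m1 m lam j))"
  show "\<forall>j. lor32 (m j) q0 = 0"
  proof (rule ccontr)
    assume "\<not> (\<forall>j. lor32 (m j) q0 = 0)"
    then obtain k where k: "lor32 (m k) q0 \<noteq> 0" by auto
    define A where "A = lor32 (m k) (m k) + (m k $ 5)^2"
    define l0 :: real where "l0 = (if (m1$6)^2 + A \<noteq> 0 then 1 else 2)"
    have l0: "l0 \<noteq> 0" "(m1$6)^2 + l0^2 * A \<noteq> 0"
    proof -
      have p: "(m1$6)^2 > 0" using c6 by simp
      show "l0 \<noteq> 0" "(m1$6)^2 + l0^2 * A \<noteq> 0" unfolding l0_def by (auto, use p in linarith)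
    qed
    define lam where "lam = (\<lambda>j. if j = k then l0 else 0)"
    have N: "lor42 (fold_vec m1 m lam j) (fold_vec m1 m lam j) \<noteq> 0" for j
    proof (induction j rule: less_induct)
      case (less j)
      then have e: "lor42 (fold_vec m1 m lam j) (fold_vec m1 m lam j)
         = (m1$6)^2 + (lam j)^2 * (lor32 (m j) (m j) + (m j $ 5)^2)"
        using fv_norm[OF m1] by blast
      show ?case unfolding e using l0 c6 by (auto simp: lam_def A_def)
    qed
    then have adm: "admissible m1 m lam" by (simp add: admissible_def)
    have "euclidean_plane (folding_sphere m1 m lam (Suc k))"
      using L adm by (simp add: curve_lies_in_plane_def)
    then have z: "lor42 (fold_map m1 m lam (Suc k) m1) q06 = 0"
      by (simp add: euclidean_plane_def folding_sphere_def)
    have Fq: "fold_map m1 m lam k q06 = q06"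
      using F_q[OF m1] N by (auto simp: lam_def)
    have iso: "isoF (fold_map m1 m lam k)" using F_iso N by auto
    have a0: "lor42 (fold_map m1 m lam k m1) q06 = 0"
      using iso Fq m1_props(3)[OF m1] unfolding isoF_def by metis
    have nq: "lor42 (fold_vec m1 m lam k) q06 = l0 * lor32 (m k) q0"
      unfolding fold_vec_def fc_q[OF iso Fq] l42_iota_q06 m1_props[OF m1] by (simp add: lam_def)
    have an: "lor42 (fold_map m1 m lam k m1) (fold_vec m1 m lam k) = (m1$6)^2"
      using fv_a[OF m1] N by blast
    have "lor42 (fold_map m1 m lam (Suc k) m1) q06 =
       - (2 * (m1$6)^2 / lor42 (fold_vec m1 m lam k) (fold_vec m1 m lam k)) * (l0 * lor32 (m k) q0)"
      by (simp add: fold_vec_def[symmetric] inv42_lor a0 an nq)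
    moreover have "\<dots> \<noteq> 0" using N[of k] c6 l0 k by simp
    ultimately show False using z by simp
  qed
next
  note m1 = assms(2)
  have c6: "m1$6 \<noteq> 0" by (rule m1_props(1)[OF m1])
  assume R: "\<forall>j. lor32 (m j) q0 = 0"
  show "\<forall>lam. admissible m1 m lam \<longrightarrow>
            (\<forall>j. curve_lies_in_plane (lifted_folding g m1 m lam j) (folding_sphere m1 m lam j))"
  proof (intro allI impI)
    fix lam j assume adm: "admissible m1 m lam"
    then have N: "\<forall>i<j. lor42 (fold_vec m1 m lam i) (fold_vec m1 m lam i) \<noteq> 0"
      by (simp add: admissible_def)
    have iso: "isoF (fold_map m1 m lam j)" using F_iso N by auto
    then have i: "lor42 (fold_map m1 m lam j x) (fold_map m1 m lam j y) = lor42 x y" for x y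
      unfolding isoF_def by blast
    have Fq: "fold_map m1 m lam j q06 = q06" using F_q[OF m1] N R by auto
    have Fp: "fold_map m1 m lam j pp6 = pp6" using iso unfolding isoF_def by blast
    have g5: "g j i $ 5 = 0" for i
      using assms(1) unfolding planar_circular_net_M_def planar_curve_def planar_point_def l32_pp
      by simp
    show "curve_lies_in_plane (lifted_folding g m1 m lam j) (folding_sphere m1 m lam j)"
      unfolding curve_lies_in_plane_def euclidean_plane_def lifted_folding_def folding_sphere_def
      using i[of m1 m1] i[of m1 pp6] i[of m1 q06] i[of "iota (g j _)" m1] Fq Fp
        m1_props[OF m1] g5 c6 by (simp add: l42_pp6)
  qed
qed

end
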